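(* Let $T>0$ and let $\mathbf u_i(t)$ (continuously differentiable) and $p_i(t)$, $i=1,\dots,N_h$, solve the semi-discrete scheme (S1)–(S2) on $[0,T]$. Set $d^{\rm add}_{ij}=d^u_{ij}-\nu s_{ij}$. Then $$\int_0^T\sum_{i=1}^{N_h}\sum_{j\in\mathcal N_i\setminus\{i\}}\Big[\frac{d^{\rm add}_{ij}}{2}|\mathbf u_j-\mathbf u_i|^2+\frac{d^p_{ij}}{2}(p_j-p_i)^2\Big]dt=\sum_{i=1}^{N_h}m_i\eta(\mathbf u_i(0))-\sum_{i=1}^{N_h}m_i\eta(\mathbf u_i(T)).$$
   Context: Setting. Let $d\in\{2,3\}$ and let $\Omega\subset\mathbb R^d$ be a box on which periodic boundary conditions are imposed (all functions on $\Omega$ are periodic, so $\Omega$ is effectively a flat torus and integration by parts produces no boundary terms). $\mathcal T_h$ is a conforming simplicial mesh of $\Omega$ compatible with periodicity, with (periodically identified) vertices $\mathbf x_1,\dots,\mathbf x_{N_h}$; $\varphi_1,\dots,\varphi_{N_h}$ are the continuous piecewise-linear Lagrange basis functions ($\varphi_i(\mathbf x_j)=\delta_{ij}$), $V_h=\mathrm{span}\{\varphi_i\}$, $\mathbf V_h=(V_h)^d$. For $v_h\in V_h$ write $v_i=v_h(\mathbf x_i)$; similarly $\mathbf u_h=\sum_j\mathbf u_j\varphi_j$ for vector-valued functions. $\mathcal N_i$ is the set of indices $j$ (including $j=i$) for which the supports of $\varphi_i,\varphi_j$ overlap. Coefficients: $m_{ij}=\int_\Omega\varphi_i\varphi_j\,dx$,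 $m_i=\int_\Omega\varphi_i\,dx$, $\mathbf c_{ij}=\int_\Omega\varphi_i\nabla\varphi_j\,dx$, $s_{ij}=\int_\Omega\nabla\varphi_i\cdot\nabla\varphi_j\,dx$, and, for a given $\mathbf u_h=\sum_j\mathbf u_j\varphi_j$, $\tilde a_{ij}=\frac{\mathbf u_i+\mathbf u_j}{2}\cdot\mathbf c_{ij}$ and $a_{ij}=\frac12\int_\Omega[\varphi_i\,\mathbf u_h\cdot\nabla\varphi_j-\varphi_j\,\mathbf u_h\cdot\nabla\varphi_i]\,dx$. The kinetic energy is $\eta(\mathbf u)=|\mathbf u|^2/2$. Scheme. Given a viscosity $\nu\ge 0$ and symmetric matrices $D^u=(d^u_{ij})$, $D^p=(d^p_{ij})$ with zero row sums ($\sum_j d^u_{ij}=\sum_j d^p_{ij}=0$) and $d^u_{ij}=d^p_{ij}=0$ for $j\notin\mathcal N_i$ (the entries $d^u_{ij}$ may depend on the current velocity), the semi-discrete scheme is the system, for all $i,k=1,\dots,N_h$, (S1) $m_i\frac{d\mathbf u_i}{dt}=\sum_{j\in\mathcal N_i}\big[(d^u_{ij}-\tilde a_{ij}-\nu s_{ij})\mathbf u_j-\mathbf c_{ij}p_j\big]$, (S2) $0=\sum_{j\in\mathcal N_k}\big[d^p_{kj}p_j-\mathbf c_{kj}\cdot\mathbf u_j\big]$, where $\tilde a_{ij}$ is computed from the current $\mathbf u_h(t)$. *)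

theory Defs
  imports "HOL-Analysis.Analysis"
begin

text \<open>The box Omega is cbox 0 L (side lengths L). Periodicity is modelled on the
universal cover R^d: the mesh is lifted to a lattice-periodic simplicial mesh of R^d.\<close>

definition lattice :: "real^'d \<Rightarrow> (real^'d) set" where
  "lattice L = {z. \<forall>k. \<exists>n::int. z$k = of_int n * L$k}"

definition periodic_mesh :: "real^'d \<Rightarrow> (real^'d) set set \<Rightarrow> bool" where
  "periodic_mesh L Th \<longleftrightarrow>
     (\<forall>S\<in>Th. int CARD('d) simplex S) \<and>
     (\<forall>S\<in>Th. \<forall>S'\<in>Th. (S \<inter> S') face_of S \<and> (S \<inter> S') face_of S') \<and>
     \<Union>Th = UNIV \<and>
     (\<forall>S\<in>Th. \<forall>z\<in>lattice L. (\<lambda>y. z + y) ` S \<in> Th) \<and>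
     (\<forall>S\<in>Th. \<exists>z\<in>lattice L. (\<lambda>y. z + y) ` S \<subseteq> cbox 0 L) \<and>
     (\<forall>B. bounded B \<longrightarrow> finite {S\<in>Th. S \<inter> B \<noteq> {}})"

definition mesh_vertices :: "(real^'d) set set \<Rightarrow> (real^'d) set" where
  "mesh_vertices Th = {v. \<exists>S\<in>Th. v extreme_point_of S}"

text \<open>x 1, ..., x N are the periodically identified vertices (one representative per
lattice class of mesh vertices) and phi i the continuous piecewise-linear Lagrange basis
function attached to x i (lifted periodically to R^d).\<close>
definition P1_nodal_basis ::
  "real^'d \<Rightarrow> (real^'d) set set \<Rightarrow> nat \<Rightarrow> (nat \<Rightarrow> real^'d) \<Rightarrow> (nat \<Rightarrow> real^'d \<Rightarrow> real) \<Rightarrow> bool" where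
  "P1_nodal_basis L Th N x \<phi> \<longleftrightarrow>
     (\<forall>i\<in>{1..N}. x i \<in> mesh_vertices Th) \<and>
     (\<forall>v\<in>mesh_vertices Th. \<exists>!i. i \<in> {1..N} \<and> v - x i \<in> lattice L) \<and>
     (\<forall>i\<in>{1..N}. continuous_on UNIV (\<phi> i) \<and>
        (\<forall>S\<in>Th. \<exists>a b. \<forall>y\<in>S. \<phi> i y = a \<bullet> y + b) \<and>
        (\<forall>v\<in>mesh_vertices Th. \<phi> i v = (if v - x i \<in> lattice L then 1 else 0)))"

definition grad :: "(real^'d \<Rightarrow> real) \<Rightarrow> real^'d \<Rightarrow> real^'d" where
  "grad f y = (\<chi> k. frechet_derivative f (at y) (axis k 1))"

definition lumped_mass :: "real^'d \<Rightarrow> (nat \<Rightarrow> real^'d \<Rightarrow> real) \<Rightarrow> nat \<Rightarrow> real" where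
  "lumped_mass L \<phi> i = integral (cbox 0 L) (\<phi> i)"

definition cmat :: "real^'d \<Rightarrow> (nat \<Rightarrow> real^'d \<Rightarrow> real) \<Rightarrow> nat \<Rightarrow> nat \<Rightarrow> real^'d" where
  "cmat L \<phi> i j = integral (cbox 0 L) (\<lambda>y. \<phi> i y *\<^sub>R grad (\<phi> j) y)"

definition stiff :: "real^'d \<Rightarrow> (nat \<Rightarrow> real^'d \<Rightarrow> real) \<Rightarrow> nat \<Rightarrow> nat \<Rightarrow> real" where
  "stiff L \<phi> i j = integral (cbox 0 L) (\<lambda>y. grad (\<phi> i) y \<bullet> grad (\<phi> j) y)"

definition nbhd :: "nat \<Rightarrow> (nat \<Rightarrow> real^'d \<Rightarrow> real) \<Rightarrow> nat \<Rightarrow> nat set" where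
  "nbhd N \<phi> i = {j \<in> {1..N}. \<exists>y. \<phi> i y \<noteq> 0 \<and> \<phi> j y \<noteq> 0}"

definition eta :: "real^'d \<Rightarrow> real" where
  "eta u = (norm u)\<^sup>2 / 2"

end

theory Submission
  imports Defs
begin

lemma sum_swap_rel:
  assumes fin: "finite I" and nb: "\<And>i. nb i = {j\<in>I. R i j}" and sym: "\<And>i j. R i j = R j i"
  shows "(\<Sum>i\<in>I. \<Sum>j\<in>nb i. f i j) = (\<Sum>i\<in>I. \<Sum>j\<in>nb i. f j i)"
proof -
  have "(\<Sum>i\<in>I. \<Sum>j\<in>{j\<in>I. R i j}. f i j) = (\<Sum>j\<in>I. \<Sum>i\<in>{i\<in>I. R i j}. f i j)"
    by (rule sum.swap_restrict[OF fin fin])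
  also have "\<dots> = (\<Sum>j\<in>I. \<Sum>i\<in>{i\<in>I. R j i}. f i j)" using sym by simp
  finally show ?thesis by (simp add: nb)
qed

lemma quad_form:
  fixes V :: "nat \<Rightarrow> 'a::real_inner" and W :: "nat \<Rightarrow> nat \<Rightarrow> real"
  assumes fin: "finite I" and nb: "\<And>i. nb i = {j\<in>I. R i j}" and sym: "\<And>i j. R i j = R j i"
    and Wsym: "\<And>i j. i\<in>I \<Longrightarrow> j\<in>I \<Longrightarrow> W i j = W j i"
    and Wrow: "\<And>i. i\<in>I \<Longrightarrow> (\<Sum>j\<in>nb i. W i j) = 0"
  shows "(\<Sum>i\<in>I. \<Sum>j\<in>nb i. W i j * (V i \<bullet> V j)) = - (1/2) * (\<Sum>i\<in>I. \<Sum>j\<in>nb i. W i j * (norm (V j - V i))\<^sup>2)"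
proof -
  have sub: "\<And>i. nb i \<subseteq> I" using nb by auto
  have A: "(\<Sum>i\<in>I. \<Sum>j\<in>nb i. W i j * (V i \<bullet> V i)) = 0"
    by (simp add: sum_distrib_right[symmetric] Wrow)
  have "(\<Sum>i\<in>I. \<Sum>j\<in>nb i. W i j * (V j \<bullet> V j)) = (\<Sum>i\<in>I. \<Sum>j\<in>nb i. W j i * (V i \<bullet> V i))"
    by (rule sum_swap_rel[OF fin nb sym])
  also have "\<dots> = (\<Sum>i\<in>I. \<Sum>j\<in>nb i. W i j * (V i \<bullet> V i))"
    using sub Wsym by (intro sum.cong refl) (metis subsetD)
  finally have B: "(\<Sum>i\<in>I. \<Sum>j\<in>nb i. W i j * (V j \<bullet> V j)) = 0" using A by simp
  have "(\<Sum>i\<in>I. \<Sum>j\<in>nb i. W i j * (norm (V j - V i))\<^sup>2)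
      = (\<Sum>i\<in>I. \<Sum>j\<in>nb i. W i j * (V j \<bullet> V j) - 2 * (W i j * (V i \<bullet> V j)) + W i j * (V i \<bullet> V i))"
    by (intro sum.cong refl) (simp add: power2_norm_eq_inner inner_diff algebra_simps inner_commute)
  also have "\<dots> = - 2 * (\<Sum>i\<in>I. \<Sum>j\<in>nb i. W i j * (V i \<bullet> V j))"
    using A B by (simp add: sum.distrib sum_subtractf sum_distrib_left sum_negf)
  finally show ?thesis by simp
qed

lemma energy_alg:
  fixes U :: "nat \<Rightarrow> real^'d" and P :: "nat \<Rightarrow> real" and D Dp :: "nat \<Rightarrow> nat \<Rightarrow> real"
    and C :: "nat \<Rightarrow> nat \<Rightarrow> real^'d"
  assumes fin: "finite I" and nb: "\<And>i. nb i = {j\<in>I. R i j}" and sym: "\<And>i j. R i j = R j i"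
    and Dsym: "\<And>i j. i\<in>I \<Longrightarrow> j\<in>I \<Longrightarrow> D i j = D j i"
    and Dpsym: "\<And>i j. i\<in>I \<Longrightarrow> j\<in>I \<Longrightarrow> Dp i j = Dp j i"
    and Drow: "\<And>i. i\<in>I \<Longrightarrow> (\<Sum>j\<in>nb i. D i j) = 0"
    and Dprow: "\<And>i. i\<in>I \<Longrightarrow> (\<Sum>j\<in>nb i. Dp i j) = 0"
    and Cskew: "\<And>i j. i\<in>I \<Longrightarrow> j\<in>I \<Longrightarrow> C j i = - C i j"
    and S2: "\<And>k. k\<in>I \<Longrightarrow> (\<Sum>j\<in>nb k. Dp k j * P j - C k j \<bullet> U j) = 0"
  shows "(\<Sum>i\<in>I. U i \<bullet> (\<Sum>j\<in>nb i. (D i j - ((U i + U j) /\<^sub>R 2) \<bullet> C i j) *\<^sub>R U j - P j *\<^sub>R C i j))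
     = - (\<Sum>i\<in>I. \<Sum>j\<in>nb i - {i}. D i j / 2 * (norm (U j - U i))\<^sup>2 + Dp i j / 2 * (P j - P i)\<^sup>2)"
proof -
  have sub: "\<And>i. nb i \<subseteq> I" using nb by auto
  have finb: "\<And>i. finite (nb i)" using fin sub finite_subset by blast
  define a where "a i j = ((U i + U j) /\<^sub>R 2) \<bullet> C i j * (U i \<bullet> U j)" for i j
  define X where "X = (\<Sum>i\<in>I. \<Sum>j\<in>nb i. D i j * (U i \<bullet> U j))"
  define Y where "Y = (\<Sum>i\<in>I. \<Sum>j\<in>nb i. a i j)"
  define Z where "Z = (\<Sum>i\<in>I. \<Sum>j\<in>nb i. P j * (U i \<bullet> C i j))"
  have L: "(\<Sum>i\<in>I. U i \<bullet> (\<Sum>j\<in>nb i. (D i j - ((U i + U j) /\<^sub>R 2) \<bullet> C i j) *\<^sub>R U j - P j *\<^sub>R C i j))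
      = X - Y - Z"
    unfolding X_def Y_def Z_def a_def
    by (simp add: inner_sum_right inner_diff_right sum_subtractf sum.distrib algebra_simps)
  have "Y = (\<Sum>i\<in>I. \<Sum>j\<in>nb i. a j i)" unfolding Y_def by (rule sum_swap_rel[OF fin nb sym])
  also have "\<dots> = - Y" unfolding Y_def sum_negf[symmetric]
  proof (intro sum.cong refl)
    fix i j assume "i \<in> I" "j \<in> nb i"
    then have "C j i = - C i j" using sub Cskew by blast
    then show "a j i = - a i j" by (simp add: a_def inner_commute add.commute)
  qed
  finally have Y0: "Y = 0" by simp
  have "Z = (\<Sum>i\<in>I. \<Sum>j\<in>nb i. P i * (U j \<bullet> C j i))" unfolding Z_def by (rule sum_swap_rel[OF fin nb sym])
  also have "\<dots> = (\<Sum>i\<in>I. - (P i * (\<Sum>j\<in>nb i. C i j \<bullet> U j)))"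
    unfolding sum_distrib_left sum_negf[symmetric]
  proof (intro sum.cong refl)
    fix i j assume "i \<in> I" "j \<in> nb i"
    then have "C j i = - C i j" using sub Cskew by blast
    then show "P i * (U j \<bullet> C j i) = - (P i * (C i j \<bullet> U j))" by (simp add: inner_commute)
  qed
  also have "\<dots> = (\<Sum>i\<in>I. - (P i * (\<Sum>j\<in>nb i. Dp i j * P j)))"
    using S2 by (intro sum.cong refl) (simp add: sum_subtractf)
  also have "\<dots> = - (\<Sum>i\<in>I. \<Sum>j\<in>nb i. Dp i j * (P i \<bullet> P j))"
    by (simp add: sum_distrib_left sum_negf algebra_simps)
  finally have Z1: "Z = (1/2) * (\<Sum>i\<in>I. \<Sum>j\<in>nb i. Dp i j * (norm (P j - P i))\<^sup>2)"
    using quad_form[OF fin nb sym Dpsym Dprow, of P] by simp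
  have X1: "X = - (1/2) * (\<Sum>i\<in>I. \<Sum>j\<in>nb i. D i j * (norm (U j - U i))\<^sup>2)"
    unfolding X_def by (rule quad_form[OF fin nb sym Dsym Drow])
  have R: "(\<Sum>i\<in>I. \<Sum>j\<in>nb i - {i}. D i j / 2 * (norm (U j - U i))\<^sup>2 + Dp i j / 2 * (P j - P i)\<^sup>2)
      = (\<Sum>i\<in>I. \<Sum>j\<in>nb i. D i j / 2 * (norm (U j - U i))\<^sup>2 + Dp i j / 2 * (P j - P i)\<^sup>2)"
    by (intro sum.cong refl sum.mono_neutral_left finb) auto
  show ?thesis unfolding L R Y0 X1 Z1
    by (simp add: sum.distrib sum_distrib_left sum_divide_distrib sum_negf algebra_simps)
qed


lemma affine_ext:
  fixes S :: "'a::euclidean_space set"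
  assumes "compact S" "convex S" and f: "\<forall>y\<in>S. f y = a \<bullet> y + b"
    and v: "\<And>v. v extreme_point_of S \<Longrightarrow> f v = c" and y: "y \<in> S"
  shows "f y = c"
proof -
  have "{v. v extreme_point_of S} \<subseteq> {z. a \<bullet> z = c - b}"
  proof
    fix v assume "v \<in> {v. v extreme_point_of S}"
    then have "v \<in> S" "f v = c" using v by (auto simp: extreme_point_of_def)
    then show "v \<in> {z. a \<bullet> z = c - b}" using f by auto
  qed
  then have "convex hull {v. v extreme_point_of S} \<subseteq> {z. a \<bullet> z = c - b}"
    by (intro hull_minimal convex_hyperplane)
  then have "y \<in> {z. a \<bullet> z = c - b}"
    using Krein_Milman_Minkowski[OF assms(1,2)] y by auto
  then show ?thesis using f y by auto
qed

lemma aff_deriv: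
  fixes S :: "'a::euclidean_space set"
  assumes y: "y \<in> interior S" and f: "\<forall>z\<in>S. f z = a \<bullet> z + b"
  shows "(f has_derivative (\<lambda>h. a \<bullet> h)) (at y)"
proof (rule has_derivative_transform_within_open[OF _ open_interior y])
  show "((\<lambda>z. a \<bullet> z + b) has_derivative (\<lambda>h. a \<bullet> h)) (at y)"
    by (auto intro!: derivative_eq_intros)
  fix z assume "z \<in> interior S"
  then have "z \<in> S" using interior_subset by blast
  then show "a \<bullet> z + b = f z" using f by simp
qed

lemma grad_eq:
  fixes f :: "real^'d \<Rightarrow> real"
  assumes "(f has_derivative (\<lambda>h. a \<bullet> h)) (at y)"
  shows "grad f y = a"
proof -
  have "frechet_derivative f (at y) = (\<lambda>h. a \<bullet> h)"
    using frechet_derivative_at[OF assms] by simp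
  then show ?thesis by (simp add: grad_def vec_eq_iff inner_axis)
qed

lemma grad_zero:
  fixes f :: "real^'d \<Rightarrow> real"
  assumes y: "y \<in> interior S" and f: "\<forall>z\<in>S. f z = 0"
  shows "grad f y = 0"
  using aff_deriv[OF y, of f 0 0] f by (intro grad_eq) simp

locale P1 =
  fixes L :: "real^'d" and Th and N :: nat and x and \<phi> :: "nat \<Rightarrow> real^'d \<Rightarrow> real"
  assumes L_pos: "\<forall>k. L$k > 0" and mesh: "periodic_mesh L Th" and basis: "P1_nodal_basis L Th N x \<phi>"
begin

lemma cell: "S\<in>Th \<Longrightarrow> compact S \<and> convex S"
proof -
  assume "S \<in> Th"
  then have "int CARD('d) simplex S" using mesh by (auto simp: periodic_mesh_def)
  then obtain C where "finite C" "S = convex hull C" by (auto simp: simplex)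
  then show ?thesis by (simp add: compact_convex_hull finite_imp_compact)
qed

lemma cover: "\<exists>S\<in>Th. y \<in> S"
  using mesh by (auto simp: periodic_mesh_def)

lemma locfin: "bounded B \<Longrightarrow> finite {S\<in>Th. S \<inter> B \<noteq> {}}"
  using mesh by (auto simp: periodic_mesh_def)

lemma affine: "i\<in>{1..N} \<Longrightarrow> S\<in>Th \<Longrightarrow> \<exists>a b. \<forall>y\<in>S. \<phi> i y = a \<bullet> y + b"
  using basis by (auto simp: P1_nodal_basis_def)

lemma cont: "i\<in>{1..N} \<Longrightarrow> continuous_on UNIV (\<phi> i)"
  using basis by (auto simp: P1_nodal_basis_def)

lemma vert:
  assumes "S\<in>Th" "v extreme_point_of S" "i\<in>{1..N}"
  shows "\<phi> i v = (if v - x i \<in> lattice L then 1 else 0)"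
proof -
  have mv: "v \<in> mesh_vertices Th" unfolding mesh_vertices_def using assms by blast
  show ?thesis using basis mv assms(3) unfolding P1_nodal_basis_def by blast
qed

lemma vert_unique:
  assumes "S\<in>Th" "v extreme_point_of S"
  shows "\<exists>!i. i\<in>{1..N} \<and> v - x i \<in> lattice L"
proof -
  have mv: "v \<in> mesh_vertices Th" unfolding mesh_vertices_def using assms by blast
  show ?thesis using basis mv unfolding P1_nodal_basis_def by blast
qed

lemma pu: "(\<Sum>j\<in>{1..N}. \<phi> j y) = 1"
proof -
  obtain S where S: "S \<in> Th" "y \<in> S" using cover by blast
  have "\<forall>j\<in>{1..N}. \<exists>a b. \<forall>y\<in>S. \<phi> j y = a \<bullet> y + b" using affine S by blast
  then have "\<exists>a. \<forall>j\<in>{1..N}. \<exists>b. \<forall>y\<in>S. \<phi> j y = a j \<bullet> y + b" by (rule bchoice)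
  then obtain a where "\<forall>j\<in>{1..N}. \<exists>b. \<forall>y\<in>S. \<phi> j y = a j \<bullet> y + b" by blast
  then have "\<exists>b. \<forall>j\<in>{1..N}. \<forall>y\<in>S. \<phi> j y = a j \<bullet> y + b j" by (rule bchoice)
  then obtain b where ab: "\<forall>j\<in>{1..N}. \<forall>y\<in>S. \<phi> j y = a j \<bullet> y + b j" by blast
  have "\<forall>z\<in>S. (\<Sum>j\<in>{1..N}. \<phi> j z) = (\<Sum>j\<in>{1..N}. a j) \<bullet> z + (\<Sum>j\<in>{1..N}. b j)"
  proof
    fix z assume z: "z \<in> S"
    have "(\<Sum>j\<in>{1..N}. \<phi> j z) = (\<Sum>j\<in>{1..N}. a j \<bullet> z + b j)"
      using ab z by (intro sum.cong refl) blast
    then show "(\<Sum>j\<in>{1..N}. \<phi> j z) = (\<Sum>j\<in>{1..N}. a j) \<bullet> z + (\<Sum>j\<in>{1..N}. b j)"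
      by (simp add: inner_sum_left sum.distrib)
  qed
  moreover have "(\<Sum>j\<in>{1..N}. \<phi> j v) = 1" if v: "v extreme_point_of S" for v
  proof -
    obtain i0 where i0: "i0\<in>{1..N}" "v - x i0 \<in> lattice L"
      and un: "\<And>j. j\<in>{1..N} \<Longrightarrow> v - x j \<in> lattice L \<Longrightarrow> j = i0"
      using vert_unique[OF S(1) v] by blast
    have "(\<Sum>j\<in>{1..N}. \<phi> j v) = (\<Sum>j\<in>{1..N}. if j = i0 then 1 else 0)"
    proof (rule sum.cong[OF refl])
      fix j assume j: "j \<in> {1..N}"
      show "\<phi> j v = (if j = i0 then 1 else 0)"
        unfolding vert[OF S(1) v j] using un[OF j] i0(2) by metis
    qed
    also have "\<dots> = 1" using i0(1) by (simp add: sum.delta)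
    finally show ?thesis .
  qed
  ultimately show ?thesis
    using affine_ext[OF conjunct1[OF cell[OF S(1)]] conjunct2[OF cell[OF S(1)]], of "\<lambda>z. \<Sum>j\<in>{1..N}. \<phi> j z", OF _ _ S(2)]
    by blast
qed

definition Z where "Z = \<Union>(frontier ` Th)"

lemma Z_neg: "negligible Z"
proof -
  define G where "G n = \<Union>(frontier ` {S\<in>Th. S \<inter> cball 0 (real n) \<noteq> {}})" for n :: nat
  have "negligible (G n)" for n
    unfolding G_def
    by (intro negligible_Union finite_imageI locfin bounded_cball)
       (auto intro!: negligible_convex_frontier dest: cell)
  then have "negligible (\<Union>n. G n)" by (rule negligible_Union_nat)
  moreover have "Z \<subseteq> (\<Union>n. G n)"
  proof
    fix y assume "y \<in> Z"
    then obtain S where S: "S \<in> Th" "y \<in> frontier S" by (auto simp: Z_def)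
    then have "y \<in> S" using cell[OF S(1)] frontier_subset_closed compact_imp_closed by blast
    moreover have "y \<in> cball 0 (real (nat \<lceil>norm y\<rceil>))" by (simp add: real_nat_ceiling_ge)
    ultimately show "y \<in> (\<Union>n. G n)" using S unfolding G_def by blast
  qed
  ultimately show ?thesis by (rule negligible_subset)
qed

lemma notZ: "y \<notin> Z \<Longrightarrow> \<exists>S\<in>Th. y \<in> interior S"
proof -
  assume y: "y \<notin> Z"
  obtain S where S: "S \<in> Th" "y \<in> S" using cover by blast
  have "y \<notin> frontier S" using y S by (auto simp: Z_def)
  moreover have "closure S = S" using cell[OF S(1)] by (simp add: compact_imp_closed closure_closed)
  ultimately show ?thesis using S by (auto simp: frontier_def)
qed

lemma deriv_phi: "y \<notin> Z \<Longrightarrow> i\<in>{1..N} \<Longrightarrow> (\<phi> i has_derivative (\<lambda>h. grad (\<phi> i) y \<bullet> h)) (at y)"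
proof -
  assume y: "y \<notin> Z" and i: "i\<in>{1..N}"
  obtain S where S: "S\<in>Th" "y \<in> interior S" using notZ[OF y] by blast
  obtain a b where ab: "\<forall>z\<in>S. \<phi> i z = a \<bullet> z + b" using affine[OF i S(1)] by blast
  have d: "(\<phi> i has_derivative (\<lambda>h. a \<bullet> h)) (at y)" by (rule aff_deriv[OF S(2) ab])
  then show ?thesis using grad_eq[OF d] by simp
qed

lemma grad_sum: "y \<notin> Z \<Longrightarrow> (\<Sum>j\<in>{1..N}. grad (\<phi> j) y) = 0"
proof -
  assume y: "y \<notin> Z"
  define G where "G = (\<Sum>j\<in>{1..N}. grad (\<phi> j) y)"
  have "((\<lambda>z. \<Sum>j\<in>{1..N}. \<phi> j z) has_derivative (\<lambda>h. \<Sum>j\<in>{1..N}. grad (\<phi> j) y \<bullet> h)) (at y)"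
    by (rule has_derivative_sum) (use deriv_phi[OF y] in auto)
  moreover have "(\<lambda>z. \<Sum>j\<in>{1..N}. \<phi> j z) = (\<lambda>z. 1)" using pu by presburger
  moreover have "(\<lambda>h. \<Sum>j\<in>{1..N}. grad (\<phi> j) y \<bullet> h) = (\<lambda>h. G \<bullet> h)"
    by (simp add: G_def inner_sum_left)
  ultimately have "((\<lambda>z. 1) has_derivative (\<lambda>h. G \<bullet> h)) (at y)" by simp
  moreover have "((\<lambda>z. 1::real) has_derivative (\<lambda>h. 0)) (at y)" by (rule has_derivative_const)
  ultimately have "(\<lambda>h. G \<bullet> h) = (\<lambda>h. 0)" by (rule has_derivative_unique)
  then have "G \<bullet> G = 0" by meson
  then show ?thesis by (simp add: G_def)
qed

lemma loc_zero:
  assumes i: "i\<in>{1..N}" and j: "j\<in>{1..N}" and nj: "j \<notin> nbhd N \<phi> i" and S: "S\<in>Th"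
    and z: "z\<in>S" and pz: "\<phi> i z \<noteq> 0" and w: "w \<in> S"
  shows "\<phi> j w = 0"
proof (rule ccontr)
  assume qw: "\<phi> j w \<noteq> 0"
  obtain a b where ab: "\<forall>y\<in>S. \<phi> i y = a \<bullet> y + b" using affine[OF i S] by blast
  obtain a' b' where ab': "\<forall>y\<in>S. \<phi> j y = a' \<bullet> y + b'" using affine[OF j S] by blast
  define m where "m = (1/2::real) *\<^sub>R z + (1/2::real) *\<^sub>R w"
  have m: "m \<in> S" using cell[OF S] z w unfolding m_def by (intro convexD) auto
  have pm: "\<phi> i m = (\<phi> i z + \<phi> i w) / 2" using ab z w m
    by (simp add: m_def inner_add_right algebra_simps)
  have qm: "\<phi> j m = (\<phi> j z + \<phi> j w) / 2" using ab' z w m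
    by (simp add: m_def inner_add_right algebra_simps)
  have "\<exists>y. \<phi> i y \<noteq> 0 \<and> \<phi> j y \<noteq> 0"
  proof (cases "\<phi> i w \<noteq> 0")
    case True then show ?thesis using qw by blast
  next
    case False
    show ?thesis
    proof (cases "\<phi> j z \<noteq> 0")
      case True then show ?thesis using pz by blast
    next
      case False2: False
      then have "\<phi> i m \<noteq> 0" "\<phi> j m \<noteq> 0" using pm qm False pz qw by auto
      then show ?thesis by blast
    qed
  qed
  then have "j \<in> nbhd N \<phi> i" using j by (simp add: nbhd_def)
  then show False using nj by blast
qed

lemma stiff_pt:
  assumes y: "y \<notin> Z" and i: "i\<in>{1..N}"
  shows "grad (\<phi> i) y \<bullet> (\<Sum>j\<in>nbhd N \<phi> i. grad (\<phi> j) y) = 0"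
proof -
  obtain S where S: "S\<in>Th" "y \<in> interior S" using notZ[OF y] by blast
  show ?thesis
  proof (cases "\<exists>z\<in>S. \<phi> i z \<noteq> 0")
    case True
    then obtain z where z: "z \<in> S" "\<phi> i z \<noteq> 0" by blast
    have "(\<Sum>j\<in>nbhd N \<phi> i. grad (\<phi> j) y) = (\<Sum>j\<in>{1..N}. grad (\<phi> j) y)"
    proof (rule sum.mono_neutral_left)
      show "nbhd N \<phi> i \<subseteq> {1..N}" by (auto simp: nbhd_def)
      show "\<forall>j\<in>{1..N} - nbhd N \<phi> i. grad (\<phi> j) y = 0"
        using loc_zero[OF i _ _ S(1) z] grad_zero[OF S(2)] by blast
    qed simp
    then show ?thesis using grad_sum[OF y] by simp
  next
    case False
    then have "grad (\<phi> i) y = 0" using grad_zero[OF S(2)] by blast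
    then show ?thesis by simp
  qed
qed

end


lemma DC:
  fixes f :: "nat \<Rightarrow> 'a::euclidean_space \<Rightarrow> real"
  assumes int: "\<And>n. f n integrable_on cbox a b" and bnd: "\<And>n y. y\<in>cbox a b \<Longrightarrow> \<bar>f n y\<bar> \<le> B"
    and Z: "negligible Z" and conv: "\<And>y. y \<in> cbox a b \<Longrightarrow> y \<notin> Z \<Longrightarrow> (\<lambda>n. f n y) \<longlonglongrightarrow> F y"
  shows "F integrable_on cbox a b" "(\<lambda>n. integral (cbox a b) (f n)) \<longlonglongrightarrow> integral (cbox a b) F"
proof -
  define S where "S = cbox a b - Z"
  have neg1: "negligible {x \<in> cbox a b - S. g x \<noteq> 0}" for g :: "'a \<Rightarrow> real"
    by (rule negligible_subset[OF Z]) (auto simp: S_def)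
  have neg2: "negligible {x \<in> S - cbox a b. g x \<noteq> 0}" for g :: "'a \<Rightarrow> real"
    by (rule negligible_subset[of "{}"]) (auto simp: S_def)
  have fS: "f n integrable_on S" for n by (rule integrable_spike_set[OF int neg1 neg2])
  have hS: "(\<lambda>_. B) integrable_on S"
    by (rule integrable_spike_set[OF integrable_continuous[OF continuous_on_const] neg1 neg2])
  have le: "\<And>n x. x \<in> S \<Longrightarrow> norm (f n x) \<le> B" using bnd by (auto simp: S_def)
  have cv: "\<And>x. x \<in> S \<Longrightarrow> (\<lambda>n. f n x) \<longlonglongrightarrow> F x" using conv by (auto simp: S_def)
  note dc = dominated_convergence[OF fS hS le cv]
  show "F integrable_on cbox a b"
    by (rule integrable_spike_set[OF dc(1) neg2 neg1])
  have e1: "integral S (f n) = integral (cbox a b) (f n)" for n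
    by (rule integral_spike_set[OF neg2 neg1])
  have e2: "integral S F = integral (cbox a b) F"
    by (rule integral_spike_set[OF neg2 neg1])
  show "(\<lambda>n. integral (cbox a b) (f n)) \<longlonglongrightarrow> integral (cbox a b) F"
    using dc(2) unfolding e1 e2 .
qed

lemma DQ:
  fixes g :: "real^'d \<Rightarrow> real"
  assumes d: "(g has_derivative (\<lambda>v. G \<bullet> v)) (at y)" and c: "c > 0"
  shows "(\<lambda>n. (g (y + (c / real (Suc n)) *\<^sub>R axis k 1) - g y) / (c / real (Suc n))) \<longlonglongrightarrow> G $ k"
proof -
  define q where "q t = g (y + t *\<^sub>R axis k 1)" for t
  have l: "((\<lambda>t::real. y + t *\<^sub>R axis k 1) has_derivative (\<lambda>t. t *\<^sub>R axis k 1)) (at 0)"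
    by (auto intro!: derivative_eq_intros)
  have d': "(g has_derivative (\<lambda>v. G \<bullet> v)) (at (y + 0 *\<^sub>R axis k 1))" using d by simp
  have "(q has_derivative (\<lambda>t. G \<bullet> (t *\<^sub>R axis k 1))) (at 0)"
    unfolding q_def by (rule has_derivative_compose[OF l d'])
  then have "(q has_field_derivative G $ k) (at 0)"
    unfolding has_field_derivative_def
    by (rule has_derivative_eq_rhs) (auto simp: inner_axis mult.commute)
  then have lim: "((\<lambda>t. (q (0 + t) - q 0) / t) \<longlongrightarrow> G $ k) (at 0)"
    by (simp add: DERIV_def)
  have "(\<lambda>n. c * inverse (real (Suc n))) \<longlonglongrightarrow> c * 0"
    by (intro tendsto_intros LIMSEQ_inverse_real_of_nat)
  then have "(\<lambda>n. c / real (Suc n)) \<longlonglongrightarrow> 0" by (simp add: field_simps)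
  then have hs: "filterlim (\<lambda>n. c / real (Suc n)) (at 0) sequentially"
    using c by (auto simp: filterlim_at)
  show ?thesis using filterlim_compose[OF lim hs] by (simp add: q_def)
qed

lemma vec_split_integral:
  fixes g :: "real^'d \<Rightarrow> real"
  assumes int: "g integrable_on cbox a b" and c: "a$k \<le> c" "c \<le> b$k"
  shows "integral (cbox a b) g = integral (cbox a (\<chi> i. if i = k then c else b$i)) g
           + integral (cbox (\<chi> i. if i = k then c else a$i) b) g"
proof -
  have kb: "axis k (1::real) \<in> Basis" by simp
  have "integral (cbox a b) g = integral (cbox a b \<inter> {x. x \<bullet> axis k 1 \<le> c}) g
           + integral (cbox a b \<inter> {x. x \<bullet> axis k 1 \<ge> c}) g"
    by (rule integral_split[OF int kb])
  moreover have "cbox a b \<inter> {x. x \<bullet> axis k 1 \<le> c} = cbox a (\<chi> i. if i = k then c else b$i)"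
    using c by (auto simp: mem_box_cart inner_axis) (smt (verit))+
  moreover have "cbox a b \<inter> {x. x \<bullet> axis k 1 \<ge> c} = cbox (\<chi> i. if i = k then c else a$i) b"
    using c by (auto simp: mem_box_cart inner_axis) (smt (verit))+
  ultimately show ?thesis by simp
qed

lemma shift_int:
  fixes f :: "real^'d \<Rightarrow> real" and L :: "real^'d"
  assumes cont: "continuous_on UNIV f" and per: "\<And>y. f (y + (L$k) *\<^sub>R axis k 1) = f y"
    and L: "\<And>i. L$i \<ge> 0" and h: "0 \<le> h" "h \<le> L$k"
  shows "integral (cbox 0 L) (\<lambda>y. f (y + h *\<^sub>R axis k 1)) = integral (cbox 0 L) f"
proof -
  define e :: "real^'d" where "e = axis k 1"
  define l where "l = L$k"
  define upd :: "real^'d \<Rightarrow> real \<Rightarrow> real^'d" where "upd v c = (\<chi> i. if i = k then c else v$i)" for v c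
  have ci: "g integrable_on cbox a b" if "continuous_on UNIV g" for a b and g :: "real^'d \<Rightarrow> real"
    using that by (intro integrable_continuous) (auto intro: continuous_on_subset)
  have cf: "continuous_on UNIV (\<lambda>y. f (y + h *\<^sub>R e))"
    by (intro continuous_on_compose2[OF cont] continuous_intros) auto
  have A: "integral (cbox 0 L) (\<lambda>y. f (y + h *\<^sub>R e)) =
      integral (cbox 0 (upd L (l - h))) (\<lambda>y. f (y + h *\<^sub>R e)) + integral (cbox (upd 0 (l - h)) L) (\<lambda>y. f (y + h *\<^sub>R e))"
    unfolding upd_def using h L by (intro vec_split_integral ci[OF cf]) (auto simp: l_def)
  have B: "integral (cbox 0 L) f = integral (cbox 0 (upd L h)) f + integral (cbox (upd 0 h) L) f"
    unfolding upd_def using h L by (intro vec_split_integral ci[OF cont]) auto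
  have C1: "integral (cbox 0 (upd L (l - h))) (\<lambda>y. f (y + h *\<^sub>R e)) = integral (cbox (upd 0 h) L) f"
  proof -
    have "integral (cbox (h *\<^sub>R e - h *\<^sub>R e) (L - h *\<^sub>R e)) (\<lambda>y. f (y + h *\<^sub>R e)) = integral (cbox (h *\<^sub>R e) L) f"
      by (rule integral_shift_cbox)
    moreover have "h *\<^sub>R e - h *\<^sub>R e = 0" by simp
    moreover have "L - h *\<^sub>R e = upd L (l - h)" by (simp add: vec_eq_iff upd_def e_def l_def axis_def)
    moreover have "h *\<^sub>R e = upd 0 h" by (simp add: vec_eq_iff upd_def e_def axis_def)
    ultimately show ?thesis by simp
  qed
  have C2: "integral (cbox (upd 0 (l - h)) L) (\<lambda>y. f (y + h *\<^sub>R e)) = integral (cbox 0 (upd L h)) f"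
  proof -
    have eq: "(\<lambda>y. f (y + h *\<^sub>R e)) = (\<lambda>y. f (y + (h - l) *\<^sub>R e))"
    proof
      fix y
      have "f (y + (h - l) *\<^sub>R e) = f ((y + (h - l) *\<^sub>R e) + l *\<^sub>R e)" using per by (simp add: e_def l_def)
      also have "(y + (h - l) *\<^sub>R e) + l *\<^sub>R e = y + h *\<^sub>R e" by (simp add: algebra_simps)
      finally show "f (y + h *\<^sub>R e) = f (y + (h - l) *\<^sub>R e)" by simp
    qed
    have X: "integral (cbox (upd 0 (l - h)) L) (\<lambda>y. f (y + (h - l) *\<^sub>R e))
        = integral (cbox (upd 0 (l - h) + (h - l) *\<^sub>R e) (L + (h - l) *\<^sub>R e)) f"
      using integral_shift_cbox[of "upd 0 (l - h) + (h - l) *\<^sub>R e" "(h - l) *\<^sub>R e" "L + (h - l) *\<^sub>R e" f]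
      by (simp only: add_diff_cancel)
    moreover have "upd 0 (l - h) + (h - l) *\<^sub>R e = 0" by (simp add: vec_eq_iff upd_def e_def axis_def)
    moreover have "L + (h - l) *\<^sub>R e = upd L h" by (simp add: vec_eq_iff upd_def e_def l_def axis_def)
    ultimately show ?thesis unfolding eq by (simp only:)
  qed
  show ?thesis using A B C1 C2 by (simp add: e_def)
qed


lemma lattice_add: "a \<in> lattice L \<Longrightarrow> b \<in> lattice L \<Longrightarrow> a + b \<in> lattice L"
proof (unfold lattice_def, intro CollectI allI)
  fix k assume a: "a \<in> {z. \<forall>k. \<exists>n::int. z$k = of_int n * L$k}" and b: "b \<in> {z. \<forall>k. \<exists>n::int. z$k = of_int n * L$k}"
  obtain n where n: "a$k = of_int n * L$k" using a by blast
  obtain m where m: "b$k = of_int m * L$k" using b by blast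
  show "\<exists>n::int. (a + b)$k = of_int n * L$k"
    by (rule exI[of _ "n + m"]) (simp add: n m algebra_simps)
qed

lemma lattice_neg: "a \<in> lattice L \<Longrightarrow> - a \<in> lattice L"
proof (unfold lattice_def, intro CollectI allI)
  fix k assume a: "a \<in> {z. \<forall>k. \<exists>n::int. z$k = of_int n * L$k}"
  obtain n where n: "a$k = of_int n * L$k" using a by blast
  show "\<exists>n::int. (- a)$k = of_int n * L$k"
    by (rule exI[of _ "- n"]) (simp add: n)
qed

lemma lattice_axis: "(L$k) *\<^sub>R axis k 1 \<in> lattice L"
proof (unfold lattice_def, intro CollectI allI)
  fix j
  show "\<exists>n::int. ((L$k) *\<^sub>R axis k 1)$j = of_int n * L$j"
    by (cases "j = k") (auto simp: axis_def intro: exI[of _ 1] exI[of _ 0])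
qed

context P1
begin

lemma periodic:
  assumes i: "i\<in>{1..N}" and z: "z \<in> lattice L"
  shows "\<phi> i (y + z) = \<phi> i y"
proof -
  obtain S where S: "S \<in> Th" "y \<in> S" using cover by blast
  define S' where "S' = (\<lambda>w. z + w) ` S"
  have S': "S' \<in> Th" using mesh S(1) z by (auto simp: periodic_mesh_def S'_def)
  obtain a b where ab: "\<forall>w\<in>S. \<phi> i w = a \<bullet> w + b" using affine[OF i S(1)] by blast
  obtain a' b' where ab': "\<forall>w\<in>S'. \<phi> i w = a' \<bullet> w + b'" using affine[OF i S'] by blast
  have lat: "p \<in> lattice L \<longleftrightarrow> z + p \<in> lattice L" for p
  proof
    assume "p \<in> lattice L" then show "z + p \<in> lattice L" using lattice_add[OF z] by blast
  next
    assume "z + p \<in> lattice L"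
    then have "(z + p) + (- z) \<in> lattice L" using lattice_add lattice_neg[OF z] by blast
    then show "p \<in> lattice L" by simp
  qed
  have f: "\<forall>w\<in>S. \<phi> i (w + z) - \<phi> i w = (a' - a) \<bullet> w + (a' \<bullet> z + b' - b)"
  proof
    fix w assume w: "w \<in> S"
    then have "w + z \<in> S'" by (auto simp: S'_def add.commute)
    then show "\<phi> i (w + z) - \<phi> i w = (a' - a) \<bullet> w + (a' \<bullet> z + b' - b)"
      using ab' ab w by (simp add: inner_diff_left inner_add_right)
  qed
  have v: "\<phi> i (v + z) - \<phi> i v = 0" if v: "v extreme_point_of S" for v
  proof -
    have "(z + v) extreme_point_of S'" unfolding S'_def using v by (simp add: extreme_point_of_translation_eq)
    then have "\<phi> i (z + v) = (if z + v - x i \<in> lattice L then 1 else 0)" by (rule vert[OF S' _ i])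
    moreover have "\<phi> i v = (if v - x i \<in> lattice L then 1 else 0)" by (rule vert[OF S(1) v i])
    moreover have "z + v - x i \<in> lattice L \<longleftrightarrow> v - x i \<in> lattice L"
      using lat[of "v - x i"] by (simp add: algebra_simps)
    ultimately show ?thesis by (simp add: add.commute)
  qed
  have "\<phi> i (y + z) - \<phi> i y = 0"
    using affine_ext[OF conjunct1[OF cell[OF S(1)]] conjunct2[OF cell[OF S(1)]], of "\<lambda>w. \<phi> i (w + z) - \<phi> i w", OF f v S(2)]
    by blast
  then show ?thesis by simp
qed

lemma inB:
  assumes y: "y \<in> cbox 0 L" and h: "h \<in> {0..1}"
  shows "y + h *\<^sub>R axis k 1 \<in> cball 0 (norm L + 1)"
proof -
  have "norm y \<le> norm L"
    by (rule norm_le_componentwise_cart) (use y L_pos in \<open>auto simp: mem_box_cart intro: order_trans[OF _ abs_ge_self]\<close>)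
  moreover have "norm (y + h *\<^sub>R axis k 1) \<le> norm y + norm (h *\<^sub>R axis k (1::real))" by (rule norm_triangle_ineq)
  moreover have "norm (h *\<^sub>R axis k (1::real)) \<le> 1" using h by simp
  ultimately show ?thesis by simp
qed

lemma bnd:
  assumes i: "i\<in>{1..N}"
  shows "\<exists>C. \<forall>y\<in>cbox 0 L. \<forall>h\<in>{0..1}. \<bar>\<phi> i (y + h *\<^sub>R axis k 1)\<bar> \<le> C"
proof -
  have "compact (\<phi> i ` cball 0 (norm L + 1))"
    by (rule compact_continuous_image) (use cont[OF i] in \<open>auto intro: continuous_on_subset\<close>)
  then obtain C where C: "\<forall>v\<in>\<phi> i ` cball 0 (norm L + 1). norm v \<le> C"
    using compact_imp_bounded bounded_iff by metis
  show ?thesis using C inB by (intro exI[of _ C]) auto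
qed

end


context P1
begin

lemma lip:
  assumes i: "i\<in>{1..N}"
  shows "\<exists>M\<ge>0. \<forall>y\<in>cbox 0 L. \<forall>h\<in>{0..1}. \<bar>\<phi> i (y + h *\<^sub>R axis k 1) - \<phi> i y\<bar> \<le> M * h"
proof -
  define e :: "real^'d" where "e = axis k 1"
  define B :: "(real^'d) set" where "B = cball 0 (norm L + 1)"
  define F where "F = {S\<in>Th. S \<inter> B \<noteq> {}}"
  have finF: "finite F" unfolding F_def B_def by (rule locfin) simp
  have "\<forall>S\<in>Th. \<exists>a b. \<forall>w\<in>S. \<phi> i w = a \<bullet> w + b" using affine[OF i] by blast
  then have "\<exists>A. \<forall>S\<in>Th. \<exists>b. \<forall>w\<in>S. \<phi> i w = A S \<bullet> w + b" by (rule bchoice)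
  then obtain A where "\<forall>S\<in>Th. \<exists>b. \<forall>w\<in>S. \<phi> i w = A S \<bullet> w + b" by blast
  then have "\<exists>c. \<forall>S\<in>Th. \<forall>w\<in>S. \<phi> i w = A S \<bullet> w + c S" by (rule bchoice)
  then obtain c where Ac: "\<forall>S\<in>Th. \<forall>w\<in>S. \<phi> i w = A S \<bullet> w + c S" by blast
  define M where "M = (\<Sum>S\<in>F. norm (A S))"
  have M0: "M \<ge> 0" unfolding M_def by (simp add: sum_nonneg)
  have MA: "norm (A S) \<le> M" if "S \<in> F" for S
    unfolding M_def by (rule member_le_sum[OF that _ finF]) simp
  show ?thesis
  proof (intro exI[of _ M] conjI ballI M0)
    fix y :: "real^'d" and h :: real assume y: "y \<in> cbox 0 L" and h: "h \<in> {0..1}"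
    define f where "f t = \<phi> i (y + t *\<^sub>R e)" for t :: real
    define J where "J S = {t\<in>{0..h}. y + t *\<^sub>R e \<in> S}" for S
    define Ex where "Ex = {0, h} \<union> (\<Union>S\<in>F. {Inf (J S), Sup (J S)})"
    have finEx: "finite Ex" unfolding Ex_def using finF by auto
    have inBt: "y + t *\<^sub>R e \<in> B" if "t \<in> {0..h}" for t
      unfolding B_def e_def by (rule inB[OF y]) (use that h in auto)
    have contl: "continuous (at t) (\<lambda>t. y + t *\<^sub>R e)" for t :: real by (intro continuous_intros)
    have Jclosed: "closed (J S)" if "S \<in> Th" for S
    proof -
      have "J S = {0..h} \<inter> (\<lambda>t. y + t *\<^sub>R e) -` S" by (auto simp: J_def)
      moreover have "closed ((\<lambda>t. y + t *\<^sub>R e) -` S)"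
        by (rule continuous_closed_vimage) (use cell[OF that] compact_imp_closed contl in auto)
      ultimately show ?thesis by auto
    qed
    have Jconv: "s \<in> J S" if S: "S \<in> Th" and a: "a \<in> J S" and b: "b \<in> J S" and s: "a \<le> s" "s \<le> b" for S a b s
    proof (cases "a = b")
      case True then show ?thesis using a s by auto
    next
      case False
      then have ab: "a < b" using s by auto
      define u where "u = (s - a) / (b - a)"
      have u: "0 \<le> u" "u \<le> 1" using s ab by (auto simp: u_def field_simps)
      have "(1 - u) *\<^sub>R (y + a *\<^sub>R e) + u *\<^sub>R (y + b *\<^sub>R e) \<in> S"
        using conjunct2[OF cell[OF S]] a b u unfolding J_def convex_alt by blast
      moreover have "(1 - u) *\<^sub>R (y + a *\<^sub>R e) + u *\<^sub>R (y + b *\<^sub>R e) = y + s *\<^sub>R e"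
      proof -
        have ub: "u * (b - a) = s - a" unfolding u_def using ab by simp
        have "(1 - u) * a + u * b = a + u * (b - a)" by (simp add: algebra_simps)
        then have "(1 - u) * a + u * b = s" using ub by simp
        moreover have "(1 - u) *\<^sub>R (y + a *\<^sub>R e) + u *\<^sub>R (y + b *\<^sub>R e) = y + ((1 - u) * a + u * b) *\<^sub>R e"
          by (simp add: algebra_simps scaleR_left_distrib[symmetric] del: scaleR_left_distrib)
        ultimately show ?thesis by simp
      qed
      ultimately show ?thesis using a b s unfolding J_def by auto
    qed
    have der: "\<exists>S\<in>F. (f has_real_derivative (A S \<bullet> e)) (at t)" if t: "t \<in> {0<..<h} - Ex" for t
    proof -
      have t0: "t \<in> {0..h}" using t by auto
      obtain S where S: "S \<in> Th" "y + t *\<^sub>R e \<in> S" using cover by blast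
      have SF: "S \<in> F" using S inBt[OF t0] by (auto simp: F_def)
      have tJ: "t \<in> J S" using S t0 by (auto simp: J_def)
      have ne: "J S \<noteq> {}" using tJ by blast
      have bb: "bdd_below (J S)" "bdd_above (J S)" by (auto simp: J_def bdd_below_def bdd_above_def)
      have IJ: "Inf (J S) \<in> J S" by (rule closed_contains_Inf[OF ne bb(1) Jclosed[OF S(1)]])
      have SJ: "Sup (J S) \<in> J S" by (rule closed_contains_Sup[OF ne bb(2) Jclosed[OF S(1)]])
      have le: "Inf (J S) \<le> t" "t \<le> Sup (J S)" using tJ bb by (auto intro: cInf_lower cSup_upper)
      have nex: "t \<noteq> Inf (J S)" "t \<noteq> Sup (J S)" using t SF by (auto simp: Ex_def)
      have lt: "Inf (J S) < t" "t < Sup (J S)" using le nex by auto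
      have eq: "A S \<bullet> y + s * (A S \<bullet> e) + c S = f s" if s: "s \<in> {Inf (J S)<..<Sup (J S)}" for s
      proof -
        have "s \<in> J S" using Jconv[OF S(1) IJ SJ] s by auto
        then show ?thesis using Ac S(1) by (auto simp: J_def f_def inner_add_right)
      qed
      have "((\<lambda>s. A S \<bullet> y + s * (A S \<bullet> e) + c S) has_real_derivative (A S \<bullet> e)) (at t)"
        by (auto intro!: derivative_eq_intros)
      then have "(f has_real_derivative (A S \<bullet> e)) (at t)"
        by (rule has_field_derivative_transform_within_open[OF _ open_greaterThanLessThan _ eq]) (use lt in auto)
      then show ?thesis using SF by blast
    qed
    define D where "D t = (if t \<in> {0<..<h} - Ex then deriv f t else 0)" for t
    have Dd: "(f has_vector_derivative D t) (at t)" if tt: "t \<in> {0<..<h} - Ex" for t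
    proof -
      obtain S where "S\<in>F" and d: "(f has_real_derivative (A S \<bullet> e)) (at t)" using der[OF tt] by blast
      then show ?thesis using tt DERIV_imp_deriv[OF d]
        by (simp add: D_def has_real_derivative_iff_has_vector_derivative[symmetric])
    qed
    have Db: "norm (D t) \<le> M" for t
    proof (cases "t \<in> {0<..<h} - Ex")
      case True
      obtain S where S: "S\<in>F" and d: "(f has_real_derivative (A S \<bullet> e)) (at t)" using der[OF True] by blast
      have "\<bar>A S \<bullet> e\<bar> \<le> norm (A S) * norm e" by (rule Cauchy_Schwarz_ineq2)
      then have "\<bar>A S \<bullet> e\<bar> \<le> M" using MA[OF S] by (simp add: e_def)
      then show ?thesis using True DERIV_imp_deriv[OF d] by (simp add: D_def)
    next
      case False then show ?thesis using M0 by (auto simp: D_def)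
    qed
    have h0: "0 \<le> h" using h by auto
    have cf: "continuous_on {0..h} f"
      unfolding f_def by (intro continuous_on_compose2[OF cont[OF i]] continuous_intros) auto
    have "(D has_integral (f h - f 0)) {0..h}"
      by (rule fundamental_theorem_of_calculus_interior_strong[OF finEx h0 Dd cf])
    then have "norm (f h - f 0) \<le> M * h"
      using has_integral_bound[OF M0, of D "f h - f 0" 0 h] Db h0 by (auto simp: content_real)
    then show "\<bar>\<phi> i (y + h *\<^sub>R axis k 1) - \<phi> i y\<bar> \<le> M * h"
      using h0 by (simp add: f_def e_def content_real)
  qed
qed

end


context P1
begin

lemma div_bound: "0 < (h::real) \<Longrightarrow> \<bar>a\<bar> \<le> M * h \<Longrightarrow> \<bar>a / h\<bar> \<le> M"
  by (simp add: abs_divide pos_divide_le_eq)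

definition hs :: "'d \<Rightarrow> nat \<Rightarrow> real" where "hs k n = min 1 (L$k) / real (Suc n)"

lemma hs: "0 < hs k n" "hs k n \<le> 1" "hs k n \<le> L$k"
proof -
  have c: "0 < min 1 (L$k)" using L_pos by simp
  have s: "1 \<le> real (Suc n)" by simp
  show "0 < hs k n" unfolding hs_def using c by simp
  have "m / real (Suc n) \<le> m" if "0 < m" for m :: real
    using that s by (simp add: divide_le_eq)
  then have "hs k n \<le> min 1 (L$k)" unfolding hs_def using c by blast
  then show "hs k n \<le> 1" "hs k n \<le> L$k" by auto
qed

definition Qd :: "nat \<Rightarrow> 'd \<Rightarrow> nat \<Rightarrow> real^'d \<Rightarrow> real" where
  "Qd i k n y = (\<phi> i (y + hs k n *\<^sub>R axis k 1) - \<phi> i y) / hs k n"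

lemma shift_cont: "continuous_on UNIV g \<Longrightarrow> continuous_on UNIV (\<lambda>y::real^'d. (g (y + c)::real))"
  by (rule continuous_on_compose2[of UNIV g]) (auto intro!: continuous_intros)

lemma Qd_cont: "i\<in>{1..N} \<Longrightarrow> continuous_on UNIV (Qd i k n)"
proof -
  assume i: "i\<in>{1..N}"
  have "continuous_on UNIV (\<lambda>y. (\<phi> i (y + hs k n *\<^sub>R axis k 1) - \<phi> i y) / hs k n)"
    by (rule continuous_on_divide[OF continuous_on_diff[OF shift_cont[OF cont[OF i]] cont[OF i]] continuous_on_const])
       (use hs(1)[of k n] in auto)
  then show ?thesis unfolding Qd_def[abs_def] .
qed

lemma Qd_bnd: "i\<in>{1..N} \<Longrightarrow> \<exists>M\<ge>0. \<forall>n. \<forall>y\<in>cbox 0 L. \<bar>Qd i k n y\<bar> \<le> M"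
proof -
  assume i: "i\<in>{1..N}"
  obtain M where M: "M \<ge> 0" "\<forall>y\<in>cbox 0 L. \<forall>h\<in>{0..1}. \<bar>\<phi> i (y + h *\<^sub>R axis k 1) - \<phi> i y\<bar> \<le> M * h"
    using lip[OF i] by blast
  have "\<bar>Qd i k n y\<bar> \<le> M" if y: "y \<in> cbox 0 L" for n y
  proof -
    have "\<bar>\<phi> i (y + hs k n *\<^sub>R axis k 1) - \<phi> i y\<bar> \<le> M * hs k n" using M(2) y hs[of k n] by auto
    then show ?thesis unfolding Qd_def by (rule div_bound[OF hs(1)])
  qed
  then show ?thesis using M(1) by blast
qed

lemma Qd_conv: "i\<in>{1..N} \<Longrightarrow> y \<notin> Z \<Longrightarrow> (\<lambda>n. Qd i k n y) \<longlonglongrightarrow> grad (\<phi> i) y $ k"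
proof -
  assume i: "i\<in>{1..N}" and y: "y \<notin> Z"
  have c: "0 < min 1 (L$k)" using L_pos by simp
  show ?thesis unfolding Qd_def hs_def by (rule DQ[OF deriv_phi[OF y i] c])
qed

lemma cont_bnd: "continuous_on UNIV w \<Longrightarrow> \<exists>W. \<forall>y\<in>cbox 0 L. \<bar>w y :: real\<bar> \<le> W"
proof -
  assume w: "continuous_on UNIV w"
  have "compact (w ` cbox 0 L)"
    by (rule compact_continuous_image) (use w in \<open>auto intro: continuous_on_subset\<close>)
  then obtain W where "\<forall>v\<in>w ` cbox 0 L. norm v \<le> W"
    using compact_imp_bounded bounded_iff by metis
  then show ?thesis by auto
qed

lemma R1:
  assumes i: "i\<in>{1..N}" and w: "continuous_on UNIV w"
  shows "(\<lambda>y. w y * grad (\<phi> i) y $ k) integrable_on cbox 0 L"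
proof -
  obtain M where M: "M \<ge> 0" "\<forall>n. \<forall>y\<in>cbox 0 L. \<bar>Qd i k n y\<bar> \<le> M" using Qd_bnd[OF i] by blast
  obtain W where W: "\<forall>y\<in>cbox 0 L. \<bar>w y\<bar> \<le> W" using cont_bnd[OF w] by blast
  show ?thesis
  proof (rule DC(1)[OF _ _ Z_neg])
    show "(\<lambda>y. w y * Qd i k n y) integrable_on cbox 0 L" for n
      by (rule integrable_continuous) (use w Qd_cont[OF i] in \<open>auto intro!: continuous_intros intro: continuous_on_subset\<close>)
    show "\<bar>w y * Qd i k n y\<bar> \<le> W * M" if "y \<in> cbox 0 L" for n y
      using W M that by (auto simp: abs_mult intro!: mult_mono)
    show "(\<lambda>n. w y * Qd i k n y) \<longlonglongrightarrow> w y * grad (\<phi> i) y $ k" if "y \<notin> Z" for y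
      by (intro tendsto_intros Qd_conv[OF i that])
  qed
qed

lemma R2:
  assumes i: "i\<in>{1..N}" and j: "j\<in>{1..N}"
  shows "(\<lambda>y. grad (\<phi> i) y $ k * grad (\<phi> j) y $ k) integrable_on cbox 0 L"
proof -
  obtain M where M: "M \<ge> 0" "\<forall>n. \<forall>y\<in>cbox 0 L. \<bar>Qd i k n y\<bar> \<le> M" using Qd_bnd[OF i] by blast
  obtain M' where M': "M' \<ge> 0" "\<forall>n. \<forall>y\<in>cbox 0 L. \<bar>Qd j k n y\<bar> \<le> M'" using Qd_bnd[OF j] by blast
  show ?thesis
  proof (rule DC(1)[OF _ _ Z_neg])
    show "(\<lambda>y. Qd i k n y * Qd j k n y) integrable_on cbox 0 L" for n
      by (rule integrable_continuous, rule continuous_on_mult[OF continuous_on_subset[OF Qd_cont[OF i]] continuous_on_subset[OF Qd_cont[OF j]]]) auto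
    show "\<bar>Qd i k n y * Qd j k n y\<bar> \<le> M * M'" if "y \<in> cbox 0 L" for n y
      using M M' that by (auto simp: abs_mult intro!: mult_mono)
    show "(\<lambda>n. Qd i k n y * Qd j k n y) \<longlonglongrightarrow> grad (\<phi> i) y $ k * grad (\<phi> j) y $ k" if "y \<notin> Z" for y
      by (intro tendsto_intros Qd_conv[OF i that] Qd_conv[OF j that])
  qed
qed

lemma R3:
  assumes i: "i\<in>{1..N}" and j: "j\<in>{1..N}"
  shows "integral (cbox 0 L) (\<lambda>y. \<phi> i y * grad (\<phi> j) y $ k + \<phi> j y * grad (\<phi> i) y $ k) = 0"
proof -
  define g where "g y = \<phi> i y * \<phi> j y" for y
  define e :: "real^'d" where "e = axis k 1"
  define f where "f n y = (g (y + hs k n *\<^sub>R e) - g y) / hs k n" for n y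
  have gc: "continuous_on UNIV g" unfolding g_def using cont[OF i] cont[OF j] by (intro continuous_intros)
  have fc: "continuous_on UNIV (f n)" for n
    unfolding f_def by (intro continuous_intros continuous_on_compose2[OF gc] gc) (use hs(1)[of k n] in auto)
  obtain M where M: "M \<ge> 0" "\<forall>y\<in>cbox 0 L. \<forall>h\<in>{0..1}. \<bar>\<phi> i (y + h *\<^sub>R e) - \<phi> i y\<bar> \<le> M * h"
    using lip[OF i] unfolding e_def by blast
  obtain M' where M': "M' \<ge> 0" "\<forall>y\<in>cbox 0 L. \<forall>h\<in>{0..1}. \<bar>\<phi> j (y + h *\<^sub>R e) - \<phi> j y\<bar> \<le> M' * h"
    using lip[OF j] unfolding e_def by blast
  obtain C where C: "\<forall>y\<in>cbox 0 L. \<forall>h\<in>{0..1}. \<bar>\<phi> i (y + h *\<^sub>R e)\<bar> \<le> C"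
    using bnd[OF i] unfolding e_def by blast
  obtain C' where C': "\<forall>y\<in>cbox 0 L. \<forall>h\<in>{0..1}. \<bar>\<phi> j (y + h *\<^sub>R e)\<bar> \<le> C'"
    using bnd[OF j] unfolding e_def by blast
  have fb: "\<bar>f n y\<bar> \<le> C * M' + C' * M" if y: "y \<in> cbox 0 L" for n y
  proof -
    define h where "h = hs k n"
    have h: "h \<in> {0..1}" "0 < h" using hs[of k n] by (auto simp: h_def)
    have "g (y + h *\<^sub>R e) - g y = \<phi> i (y + h *\<^sub>R e) * (\<phi> j (y + h *\<^sub>R e) - \<phi> j y) + \<phi> j y * (\<phi> i (y + h *\<^sub>R e) - \<phi> i y)"
      by (simp add: g_def algebra_simps)
    also have "\<bar>\<dots>\<bar> \<le> \<bar>\<phi> i (y + h *\<^sub>R e)\<bar> * \<bar>\<phi> j (y + h *\<^sub>R e) - \<phi> j y\<bar> + \<bar>\<phi> j y\<bar> * \<bar>\<phi> i (y + h *\<^sub>R e) - \<phi> i y\<bar>"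
      by (simp add: abs_mult[symmetric] abs_triangle_ineq)
    also have "\<dots> \<le> C * (M' * h) + C' * (M * h)"
    proof (intro add_mono mult_mono)
      show "\<bar>\<phi> i (y + h *\<^sub>R e)\<bar> \<le> C" using C y h by blast
      show "\<bar>\<phi> j (y + h *\<^sub>R e) - \<phi> j y\<bar> \<le> M' * h" using M' y h by blast
      have "\<bar>\<phi> j (y + 0 *\<^sub>R e)\<bar> \<le> C'" by (rule C'[rule_format, OF y]) simp
      then show "\<bar>\<phi> j y\<bar> \<le> C'" by simp
      show "\<bar>\<phi> i (y + h *\<^sub>R e) - \<phi> i y\<bar> \<le> M * h" using M y h by blast
      show "0 \<le> C" using C y h by (meson abs_ge_zero order_trans)
      show "0 \<le> C'" using \<open>\<bar>\<phi> j y\<bar> \<le> C'\<close> by (meson abs_ge_zero order_trans)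
    qed auto
    finally have "\<bar>g (y + h *\<^sub>R e) - g y\<bar> \<le> (C * M' + C' * M) * h" by (simp add: algebra_simps)
    then show ?thesis unfolding f_def h_def[symmetric] by (rule div_bound[OF h(2)])
  qed
  have fconv: "(\<lambda>n. f n y) \<longlonglongrightarrow> \<phi> i y * grad (\<phi> j) y $ k + \<phi> j y * grad (\<phi> i) y $ k" if y: "y \<notin> Z" for y
  proof -
    have "(g has_derivative (\<lambda>v. \<phi> i y * (grad (\<phi> j) y \<bullet> v) + (grad (\<phi> i) y \<bullet> v) * \<phi> j y)) (at y)"
      unfolding g_def by (rule has_derivative_mult[OF deriv_phi[OF y i] deriv_phi[OF y j]])
    then have d: "(g has_derivative (\<lambda>v. (\<phi> i y *\<^sub>R grad (\<phi> j) y + \<phi> j y *\<^sub>R grad (\<phi> i) y) \<bullet> v)) (at y)"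
      by (rule has_derivative_eq_rhs) (auto simp: inner_add_left algebra_simps)
    have c: "0 < min 1 (L$k)" using L_pos by simp
    show ?thesis using DQ[OF d c, of k] by (simp add: f_def hs_def e_def)
  qed
  have fi: "f n integrable_on cbox 0 L" for n
    by (rule integrable_continuous[OF continuous_on_subset[OF fc subset_UNIV]])
  have per: "g (y + (L$k) *\<^sub>R e) = g y" for y
    using periodic[OF i lattice_axis] periodic[OF j lattice_axis] by (simp add: g_def e_def)
  have f0: "integral (cbox 0 L) (f n) = 0" for n
  proof -
    have ci: "q integrable_on cbox 0 L" if "continuous_on UNIV q" for q :: "real^'d \<Rightarrow> real"
      using that by (intro integrable_continuous) (auto intro: continuous_on_subset)
    have gs: "continuous_on UNIV (\<lambda>y. g (y + hs k n *\<^sub>R e))"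
      by (intro continuous_on_compose2[OF gc] continuous_intros) auto
    have "integral (cbox 0 L) (\<lambda>y. g (y + hs k n *\<^sub>R e)) = integral (cbox 0 L) g"
      unfolding e_def by (rule shift_int[of g L k "hs k n"]) (use gc per L_pos hs[of k n] in \<open>auto simp: e_def less_imp_le\<close>)
    then show ?thesis unfolding f_def using integral_diff[OF ci[OF gs] ci[OF gc]] by simp
  qed
  have l0: "(\<lambda>n. integral (cbox 0 L) (f n)) \<longlonglongrightarrow> 0" unfolding f0 by simp
  have l1: "(\<lambda>n. integral (cbox 0 L) (f n)) \<longlonglongrightarrow> integral (cbox 0 L) (\<lambda>y. \<phi> i y * grad (\<phi> j) y $ k + \<phi> j y * grad (\<phi> i) y $ k)"
  proof (rule DC(2)[OF fi fb Z_neg])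
    show "\<And>y. y \<in> cbox 0 L \<Longrightarrow> y \<notin> Z \<Longrightarrow> (\<lambda>n. f n y) \<longlonglongrightarrow> \<phi> i y * grad (\<phi> j) y $ k + \<phi> j y * grad (\<phi> i) y $ k"
      by (rule fconv)
  qed
  show ?thesis using LIMSEQ_unique[OF l1 l0] .
qed

lemma cmat_int: "i\<in>{1..N} \<Longrightarrow> j\<in>{1..N} \<Longrightarrow> cmat L \<phi> i j $ k = integral (cbox 0 L) (\<lambda>y. \<phi> i y * grad (\<phi> j) y $ k)"
proof -
  assume i: "i\<in>{1..N}" and j: "j\<in>{1..N}"
  have "(\<lambda>y. \<phi> i y *\<^sub>R grad (\<phi> j) y) integrable_on cbox 0 L"
  proof (rule integrable_componentwise)
    fix b :: "real^'d" assume "b \<in> Basis"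
    then obtain m where b: "b = axis m 1" by (auto simp: Basis_vec_def)
    show "(\<lambda>y. (\<phi> i y *\<^sub>R grad (\<phi> j) y) \<bullet> b) integrable_on cbox 0 L"
      unfolding b using R1[OF j cont[OF i], of m] by (simp add: inner_axis)
  qed
  then show ?thesis unfolding cmat_def by (simp add: integral_component_eq_cart[symmetric])
qed

lemma cmat_skew': "i\<in>{1..N} \<Longrightarrow> j\<in>{1..N} \<Longrightarrow> cmat L \<phi> j i = - cmat L \<phi> i j"
proof -
  assume i: "i\<in>{1..N}" and j: "j\<in>{1..N}"
  have "cmat L \<phi> j i $ k + cmat L \<phi> i j $ k = 0" for k
  proof -
    have "cmat L \<phi> j i $ k + cmat L \<phi> i j $ k =
        integral (cbox 0 L) (\<lambda>y. \<phi> i y * grad (\<phi> j) y $ k + \<phi> j y * grad (\<phi> i) y $ k)"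
      unfolding cmat_int[OF i j] cmat_int[OF j i]
      using integral_add[OF R1[OF j cont[OF i]] R1[OF i cont[OF j]]] by (simp add: add.commute)
    then show ?thesis using R3[OF i j] by simp
  qed
  then show ?thesis by (simp add: vec_eq_iff eq_neg_iff_add_eq_0)
qed

lemma stiff_row': "i\<in>{1..N} \<Longrightarrow> (\<Sum>j\<in>nbhd N \<phi> i. stiff L \<phi> i j) = 0"
proof -
  assume i: "i\<in>{1..N}"
  have sub: "nbhd N \<phi> i \<subseteq> {1..N}" by (auto simp: nbhd_def)
  have int: "(\<lambda>y. grad (\<phi> i) y \<bullet> grad (\<phi> j) y) integrable_on cbox 0 L" if j: "j \<in> nbhd N \<phi> i" for j
  proof -
    have jj: "j\<in>{1..N}" using j sub by blast
    show ?thesis unfolding inner_vec_def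
      by (intro integrable_sum) (use R2[OF i jj] in \<open>auto simp: mult.commute\<close>)
  qed
  have "(\<Sum>j\<in>nbhd N \<phi> i. stiff L \<phi> i j) = integral (cbox 0 L) (\<lambda>y. \<Sum>j\<in>nbhd N \<phi> i. grad (\<phi> i) y \<bullet> grad (\<phi> j) y)"
    unfolding stiff_def by (rule integral_sum[symmetric]) (use int finite_subset[OF sub] in auto)
  also have "\<dots> = integral (cbox 0 L) (\<lambda>y. 0)"
    by (rule integral_spike[OF Z_neg]) (use stiff_pt[OF _ i] in \<open>auto simp: inner_sum_right\<close>)
  finally show ?thesis by simp
qed

end


lemma cmat_skew:
  assumes L_pos: "\<forall>k. L$k > 0" and mesh: "periodic_mesh L Th" and basis: "P1_nodal_basis L Th N x \<phi>"
    and i: "i \<in> {1..N}" and j: "j \<in> {1..N}"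
  shows "cmat L \<phi> j i = - cmat L \<phi> i j"
proof -
  interpret P1 L Th N x \<phi> by unfold_locales (use L_pos mesh basis in auto)
  show ?thesis by (rule cmat_skew'[OF i j])
qed

lemma stiff_row:
  assumes L_pos: "\<forall>k. L$k > 0" and mesh: "periodic_mesh L Th" and basis: "P1_nodal_basis L Th N x \<phi>"
    and i: "i \<in> {1..N}"
  shows "(\<Sum>j\<in>nbhd N \<phi> i. stiff L \<phi> i j) = 0"
proof -
  interpret P1 L Th N x \<phi> by unfold_locales (use L_pos mesh basis in auto)
  show ?thesis by (rule stiff_row'[OF i])
qed

theorem lemma1:
  fixes L :: "real^'d" and Th :: "(real^'d) set set" and N :: nat
    and x :: "nat \<Rightarrow> real^'d" and \<phi> :: "nat \<Rightarrow> real^'d \<Rightarrow> real"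
    and \<nu> T :: real
    and du dp :: "real \<Rightarrow> nat \<Rightarrow> nat \<Rightarrow> real"
    and u u' :: "real \<Rightarrow> nat \<Rightarrow> real^'d" and p :: "real \<Rightarrow> nat \<Rightarrow> real"
  assumes dim: "CARD('d) = 2 \<or> CARD('d) = 3"
    and L_pos: "\<forall>k. L$k > 0"
    and mesh: "periodic_mesh L Th"
    and basis: "P1_nodal_basis L Th N x \<phi>"
    and nu: "\<nu> \<ge> 0"
    and T: "T > 0"
    and du_sym: "\<forall>t\<in>{0..T}. \<forall>i\<in>{1..N}. \<forall>j\<in>{1..N}. du t i j = du t j i"
    and du_row: "\<forall>t\<in>{0..T}. \<forall>i\<in>{1..N}. (\<Sum>j\<in>{1..N}. du t i j) = 0"
    and du_loc: "\<forall>t\<in>{0..T}. \<forall>i\<in>{1..N}. \<forall>j\<in>{1..N}. j \<notin> nbhd N \<phi> i \<longrightarrow> du t i j = 0"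
    and dp_sym: "\<forall>t\<in>{0..T}. \<forall>i\<in>{1..N}. \<forall>j\<in>{1..N}. dp t i j = dp t j i"
    and dp_row: "\<forall>t\<in>{0..T}. \<forall>i\<in>{1..N}. (\<Sum>j\<in>{1..N}. dp t i j) = 0"
    and dp_loc: "\<forall>t\<in>{0..T}. \<forall>i\<in>{1..N}. \<forall>j\<in>{1..N}. j \<notin> nbhd N \<phi> i \<longrightarrow> dp t i j = 0"
    and u_deriv: "\<forall>i\<in>{1..N}. \<forall>t\<in>{0..T}.
                    ((\<lambda>s. u s i) has_vector_derivative u' t i) (at t within {0..T})"
    and u'_cont: "\<forall>i\<in>{1..N}. continuous_on {0..T} (\<lambda>t. u' t i)"
    and S1: "\<forall>t\<in>{0..T}. \<forall>i\<in>{1..N}.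
               lumped_mass L \<phi> i *\<^sub>R u' t i =
               (\<Sum>j\<in>nbhd N \<phi> i.
                  (du t i j - ((u t i + u t j) /\<^sub>R 2) \<bullet> cmat L \<phi> i j - \<nu> * stiff L \<phi> i j) *\<^sub>R u t j
                  - p t j *\<^sub>R cmat L \<phi> i j)"
    and S2: "\<forall>t\<in>{0..T}. \<forall>k\<in>{1..N}.
               0 = (\<Sum>j\<in>nbhd N \<phi> k. dp t k j * p t j - cmat L \<phi> k j \<bullet> u t j)"
  shows "integral {0..T} (\<lambda>t. \<Sum>i=1..N. \<Sum>j\<in>nbhd N \<phi> i - {i}.
            (du t i j - \<nu> * stiff L \<phi> i j) / 2 * (norm (u t j - u t i))\<^sup>2
            + dp t i j / 2 * (p t j - p t i)\<^sup>2)
         = (\<Sum>i=1..N. lumped_mass L \<phi> i * eta (u 0 i)) - (\<Sum>i=1..N. lumped_mass L \<phi> i * eta (u T i))"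
proof -
  define I where "I = {1..N}"
  define R where "R i j = (\<exists>y. \<phi> i y \<noteq> 0 \<and> \<phi> j y \<noteq> 0)" for i j
  define nb where "nb = nbhd N \<phi>"
  have fin: "finite I" by (simp add: I_def)
  have nb: "\<And>i. nb i = {j\<in>I. R i j}" by (simp add: nb_def nbhd_def I_def R_def)
  have sym: "\<And>i j. R i j = R j i" by (auto simp: R_def)
  have sub: "\<And>i. nb i \<subseteq> I" using nb by auto
  define m where "m i = lumped_mass L \<phi> i" for i
  define E where "E t = (\<Sum>i\<in>I. m i * eta (u t i))" for t
  define F where "F t = (\<Sum>i\<in>I. \<Sum>j\<in>nb i - {i}.
            (du t i j - \<nu> * stiff L \<phi> i j) / 2 * (norm (u t j - u t i))\<^sup>2
            + dp t i j / 2 * (p t j - p t i)\<^sup>2)" for t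
  have skew: "\<And>i j. i\<in>I \<Longrightarrow> j\<in>I \<Longrightarrow> cmat L \<phi> j i = - cmat L \<phi> i j"
    using cmat_skew[OF L_pos mesh basis] unfolding I_def by blast
  have srow: "\<And>i. i\<in>I \<Longrightarrow> (\<Sum>j\<in>nb i. stiff L \<phi> i j) = 0"
    using stiff_row[OF L_pos mesh basis] by (auto simp: I_def nb_def)
  have ssym: "\<And>i j. stiff L \<phi> i j = stiff L \<phi> j i"
    by (simp add: stiff_def inner_commute)
  have deriv: "((\<lambda>t. - E t) has_vector_derivative F t) (at t within {0..T})" if t: "t \<in> {0..T}" for t
  proof -
    have di: "((\<lambda>s. m i * eta (u s i)) has_derivative (\<lambda>h. h * (m i * (u t i \<bullet> u' t i)))) (at t within {0..T})"
      if i: "i \<in> I" for i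
    proof -
      have ud: "((\<lambda>s. u s i) has_derivative (\<lambda>h. h *\<^sub>R u' t i)) (at t within {0..T})"
        using u_deriv i t by (auto simp: I_def has_vector_derivative_def)
      have "((\<lambda>s. u s i \<bullet> u s i) has_derivative
              (\<lambda>h. u t i \<bullet> (h *\<^sub>R u' t i) + (h *\<^sub>R u' t i) \<bullet> u t i)) (at t within {0..T})"
        by (rule has_derivative_inner[OF ud ud])
      then have "((\<lambda>s. (m i / 2) * (u s i \<bullet> u s i)) has_derivative
              (\<lambda>h. (m i / 2) * (u t i \<bullet> (h *\<^sub>R u' t i) + (h *\<^sub>R u' t i) \<bullet> u t i))) (at t within {0..T})"
        by (rule has_derivative_mult_right)
      moreover have "(\<lambda>s. m i * eta (u s i)) = (\<lambda>s. (m i / 2) * (u s i \<bullet> u s i))"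
        by (simp add: eta_def power2_norm_eq_inner fun_eq_iff)
      ultimately show ?thesis
        by (simp add: inner_commute algebra_simps)
    qed
    have "(E has_derivative (\<lambda>h. \<Sum>i\<in>I. h * (m i * (u t i \<bullet> u' t i)))) (at t within {0..T})"
      unfolding E_def by (rule has_derivative_sum) (use di in auto)
    then have "(E has_vector_derivative (\<Sum>i\<in>I. m i * (u t i \<bullet> u' t i))) (at t within {0..T})"
      by (simp add: has_vector_derivative_def sum_distrib_left mult.commute)
    moreover have "(\<Sum>i\<in>I. m i * (u t i \<bullet> u' t i)) = - F t"
    proof -
      have "(\<Sum>i\<in>I. m i * (u t i \<bullet> u' t i)) = (\<Sum>i\<in>I. u t i \<bullet> (m i *\<^sub>R u' t i))"
        by (simp add: inner_commute)
      also have "\<dots> = (\<Sum>i\<in>I. u t i \<bullet> (\<Sum>j\<in>nb i.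
                  (du t i j - \<nu> * stiff L \<phi> i j - ((u t i + u t j) /\<^sub>R 2) \<bullet> cmat L \<phi> i j) *\<^sub>R u t j
                  - p t j *\<^sub>R cmat L \<phi> i j))"
        using S1 t by (intro sum.cong refl) (auto simp: I_def m_def nb_def algebra_simps)
      also have "\<dots> = - F t" unfolding F_def
      proof (rule energy_alg[OF fin nb sym])
        show "\<And>i j. i \<in> I \<Longrightarrow> j \<in> I \<Longrightarrow> du t i j - \<nu> * stiff L \<phi> i j = du t j i - \<nu> * stiff L \<phi> j i"
          using du_sym t ssym by (auto simp: I_def)
        show "\<And>i j. i \<in> I \<Longrightarrow> j \<in> I \<Longrightarrow> dp t i j = dp t j i"
          using dp_sym t by (auto simp: I_def)
        show "\<And>i j. i \<in> I \<Longrightarrow> j \<in> I \<Longrightarrow> cmat L \<phi> j i = - cmat L \<phi> i j" by (rule skew)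
        show "\<And>k. k \<in> I \<Longrightarrow> (\<Sum>j\<in>nb k. dp t k j * p t j - cmat L \<phi> k j \<bullet> u t j) = 0"
          using S2 t by (auto simp: I_def nb_def)
        have rowz: "(\<Sum>j\<in>nb i. g i j) = 0" if "i \<in> I" and row: "(\<Sum>j\<in>I. g i j) = 0"
          and loc: "\<forall>j\<in>I. j \<notin> nb i \<longrightarrow> g i j = 0" for i and g :: "nat \<Rightarrow> nat \<Rightarrow> real"
        proof -
          have "(\<Sum>j\<in>nb i. g i j) = (\<Sum>j\<in>I. g i j)"
            by (rule sum.mono_neutral_left[OF fin sub]) (use loc in auto)
          then show ?thesis using row by simp
        qed
        show "\<And>i. i \<in> I \<Longrightarrow> (\<Sum>j\<in>nb i. dp t i j) = 0"
          using rowz dp_row dp_loc t by (auto simp: I_def nb_def)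
        show "(\<Sum>j\<in>nb i. du t i j - \<nu> * stiff L \<phi> i j) = 0" if "i \<in> I" for i
        proof -
          have "(\<Sum>j\<in>nb i. du t i j) = 0"
            using rowz[of i "du t"] du_row du_loc t that by (auto simp: I_def nb_def)
          then show ?thesis using srow[OF that] by (simp add: sum_subtractf sum_distrib_left[symmetric])
        qed
      qed
      finally show ?thesis .
    qed
    ultimately have "(E has_vector_derivative - F t) (at t within {0..T})" by simp
    then show ?thesis using has_vector_derivative_minus by fastforce
  qed
  have "(F has_integral (- E T - - E 0)) {0..T}"
    by (rule fundamental_theorem_of_calculus) (use T deriv in auto)
  then have "integral {0..T} F = E 0 - E T" by (simp add: integral_unique)
  then show ?thesis unfolding F_def[abs_def] E_def I_def m_def nb_def by simp
qed

end
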